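(* Let $\mathbf{A}\in\mathbb{R}^{M\times N}$, $M=m\prod_{j=1}^L\ell_j$, $N=n\prod_{j=1}^Lq_j$, have the multilevel block structure \[\mathbf{A}=\sum_{i_1=1}^{p_1}\cdots\sum_{i_L=1}^{p_L}\mathbf{E}^{(1)}_{i_1}\otimes\cdots\otimes\mathbf{E}^{(L)}_{i_L}\otimes\sqrt{\eta^{(1)}_{i_1}\cdots\eta^{(L)}_{i_L}}\,\mathbf{A}^{(i_1,\dots,i_L)}\] described in the context, and let $\mathcal{T}_{\mathcal{E}}[\mathbf{A}]$ and $\mathcal{M}_{\mathcal{E}}$ be as defined there. Let $\widehat{\mathcal{T}}_{\mathcal{E}}[\mathbf{A}]\in\mathbb{R}^{m\times p_1\times\cdots\times p_L\times n}$ be any tensor (an approximation of $\mathcal{T}_{\mathcal{E}}[\mathbf{A}]$). Then \[\big\|\mathbf{A}-\mathcal{M}_{\mathcal{E}}[\widehat{\mathcal{T}}_{\mathcal{E}}[\mathbf{A}]]\big\|_F=\big\|\mathcal{T}_{\mathcal{E}}[\mathbf{A}]-\widehat{\mathcal{T}}_{\mathcal{E}}[\mathbf{A}]\big\|_F.\]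
   Context: For each level $j=1,\dots,L$ there are $p_j$ matrices $\mathbf{E}^{(j)}_1,\dots,\mathbf{E}^{(j)}_{p_j}\in\mathbb{R}^{\ell_j\times q_j}$ ($1\le p_j\le\ell_jq_j$), where $\mathbf{E}^{(j)}_k$ has entries in $\{0,1/\sqrt{\eta^{(j)}_k}\}$, $\eta^{(j)}_k\ge1$ is its number of nonzero entries, and the supports of $\mathbf{E}^{(j)}_k$ for distinct $k$ are disjoint (they record the positions of repeated blocks at level $j$). $\mathbf{A}^{(i_1,\dots,i_L)}\in\mathbb{R}^{m\times n}$ are the non-redundant blocks at the lowest level; $\mathcal{E}=(\mathcal{E}^{(1)},\dots,\mathcal{E}^{(L)})$ with $\mathcal{E}^{(j)}=(\mathbf{E}^{(j)}_1,\dots,\mathbf{E}^{(j)}_{p_j})$. The Kronecker product $\mathbf{B}\otimes\mathbf{C}$ has $(i,j)$ block $b_{ij}\mathbf{C}$. The tensor $\mathcal{T}_{\mathcal{E}}[\mathbf{A}]\in\mathbb{R}^{m\times p_1\times\cdots\times p_L\times n}$ has entries $(\mathcal{T}_{\mathcal{E}}[\mathbf{A}])_{a,i_1,\dots,i_L,b}=\sqrt{\eta^{(1)}_{i_1}\cdots\eta^{(L)}_{i_L}}\,(\mathbf{A}^{(i_1,\dots,i_L)})_{ab}$. For $\mathcal{X}\in\mathbb{R}^{m\times p_1\times\cdots\times p_L\times n}$, let $\mathrm{sq}(\mathcal{X}_{:,i_1,\dots,i_L,:})$ be the $m\times n$ matrix with $(a,b)$ entry $\mathcal{X}_{a,i_1,\dots,i_L,b}$,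 and $\mathcal{M}_{\mathcal{E}}[\mathcal{X}]=\sum_{i_1=1}^{p_1}\cdots\sum_{i_L=1}^{p_L}\mathbf{E}^{(1)}_{i_1}\otimes\cdots\otimes\mathbf{E}^{(L)}_{i_L}\otimes\mathrm{sq}(\mathcal{X}_{:,i_1,\dots,i_L,:})$. The Frobenius norm of a tensor is the square root of the sum of squares of its entries. *)

theory Defs
  imports Complex_Main
begin

text \<open>Matrices are functions nat => nat => real; only the entries inside the
declared dimensions matter. Indices are 0-based.\<close>

type_synonym mat = "nat \<Rightarrow> nat \<Rightarrow> real"

text \<open>Tensors in R^(m x p_1 x ... x p_L x n): the middle multi-index
(i_1,...,i_L) is a list of length L.\<close>
type_synonym tens = "nat \<Rightarrow> nat list \<Rightarrow> nat \<Rightarrow> real"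

definition frob :: "nat \<Rightarrow> nat \<Rightarrow> mat \<Rightarrow> real" where
  "frob M N X = sqrt (\<Sum>r<M. \<Sum>c<N. (X r c)^2)"

definition kron :: "nat \<Rightarrow> nat \<Rightarrow> mat \<Rightarrow> mat \<Rightarrow> mat" where
  "kron rC cC B C = (\<lambda>i j. B (i div rC) (j div cC) * C (i mod rC) (j mod cC))"

text \<open>B_1 (x) ... (x) B_k (x) X, each B_i given with its size (rows, cols), X of size m x n.\<close>
fun kron_list :: "(mat \<times> nat \<times> nat) list \<Rightarrow> nat \<Rightarrow> nat \<Rightarrow> mat \<Rightarrow> mat" where
  "kron_list [] m n X = X"
| "kron_list ((B, r, c) # bs) m n X =
     kron (m * prod_list (map (fst \<circ> snd) bs)) (n * prod_list (map (snd \<circ> snd) bs))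
          B (kron_list bs m n X)"

definition idxs :: "nat \<Rightarrow> (nat \<Rightarrow> nat) \<Rightarrow> nat list set" where
  "idxs L p = {is. length is = L \<and> (\<forall>j<L. is ! j < p j)}"

definition tfrob :: "nat \<Rightarrow> nat \<Rightarrow> nat \<Rightarrow> (nat \<Rightarrow> nat) \<Rightarrow> tens \<Rightarrow> real" where
  "tfrob m n L p X = sqrt (\<Sum>a<m. \<Sum>is\<in>idxs L p. \<Sum>b<n. (X a is b)^2)"

text \<open>E j k is the matrix E^{(j+1)}_{k+1} of size ell j x q j.\<close>
definition eta :: "(nat \<Rightarrow> nat) \<Rightarrow> (nat \<Rightarrow> nat) \<Rightarrow> (nat \<Rightarrow> nat \<Rightarrow> mat) \<Rightarrow> nat \<Rightarrow> nat \<Rightarrow> nat" where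
  "eta ell q E j k = card {(r, c). r < ell j \<and> c < q j \<and> E j k r c \<noteq> 0}"

definition kron_factors :: "nat \<Rightarrow> (nat \<Rightarrow> nat) \<Rightarrow> (nat \<Rightarrow> nat) \<Rightarrow> (nat \<Rightarrow> nat \<Rightarrow> mat)
    \<Rightarrow> nat list \<Rightarrow> (mat \<times> nat \<times> nat) list" where
  "kron_factors L ell q E is = map (\<lambda>j. (E j (is ! j), ell j, q j)) [0..<L]"

definition ME :: "nat \<Rightarrow> nat \<Rightarrow> nat \<Rightarrow> (nat \<Rightarrow> nat) \<Rightarrow> (nat \<Rightarrow> nat) \<Rightarrow> (nat \<Rightarrow> nat)
    \<Rightarrow> (nat \<Rightarrow> nat \<Rightarrow> mat) \<Rightarrow> tens \<Rightarrow> mat" where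
  "ME m n L ell q p E X = (\<lambda>r c. \<Sum>is\<in>idxs L p.
      kron_list (kron_factors L ell q E is) m n (\<lambda>a b. X a is b) r c)"

definition TE :: "(nat \<Rightarrow> nat) \<Rightarrow> (nat \<Rightarrow> nat) \<Rightarrow> nat \<Rightarrow> (nat \<Rightarrow> nat \<Rightarrow> mat)
    \<Rightarrow> (nat list \<Rightarrow> mat) \<Rightarrow> tens" where
  "TE ell q L E Ablk = (\<lambda>a is b.
      sqrt (\<Prod>j<L. real (eta ell q E j (is ! j))) * Ablk is a b)"

definition valid_E :: "nat \<Rightarrow> (nat \<Rightarrow> nat) \<Rightarrow> (nat \<Rightarrow> nat) \<Rightarrow> (nat \<Rightarrow> nat) \<Rightarrow> (nat \<Rightarrow> nat \<Rightarrow> mat) \<Rightarrow> bool" where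
  "valid_E L ell q p E \<longleftrightarrow>
     (\<forall>j<L. 1 \<le> p j \<and> p j \<le> ell j * q j) \<and>
     (\<forall>j<L. \<forall>k<p j. eta ell q E j k \<ge> 1) \<and>
     (\<forall>j<L. \<forall>k<p j. \<forall>r<ell j. \<forall>c<q j.
        E j k r c = 0 \<or> E j k r c = 1 / sqrt (real (eta ell q E j k))) \<and>
     (\<forall>j<L. \<forall>k1<p j. \<forall>k2<p j. k1 \<noteq> k2 \<longrightarrow>
        (\<forall>r<ell j. \<forall>c<q j. E j k1 r c = 0 \<or> E j k2 r c = 0))"

end

theory Submission
  imports Defs
begin

lemma prod_list_upt: "prod_list (map f [0..<L]) = (\<Prod>j<L. f j)"
  by (induct L) (simp_all add: lessThan_Suc mult.commute)

lemma sum_divmod: "(\<Sum>i<(a::nat)*R. f (i div R) (i mod R)) = (\<Sum>x<a. \<Sum>u<R. (f x u :: real))"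
proof (induct a)
  case 0 then show ?case by simp
next
  case (Suc a)
  have "{..<Suc a * R} = {..<a*R} \<union> {a*R..<a*R+R}" by auto
  then have "(\<Sum>i<Suc a*R. f (i div R) (i mod R)) = (\<Sum>i<a*R. f (i div R) (i mod R)) + (\<Sum>i\<in>{a*R..<a*R+R}. f (i div R) (i mod R))"
    by (simp add: sum.union_disjoint ivl_disj_int)
  also have "(\<Sum>i\<in>{a*R..<a*R+R}. f (i div R) (i mod R)) = (\<Sum>u<R. f a u)"
  proof -
    have "(\<Sum>i\<in>{a*R..<a*R+R}. f (i div R) (i mod R)) = (\<Sum>u\<in>{0..<R}. f ((u + a*R) div R) ((u+a*R) mod R))"
      using sum.shift_bounds_nat_ivl[of "\<lambda>i. f (i div R) (i mod R)" 0 "a*R" R] by (simp add: add.commute)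
    also have "\<dots> = (\<Sum>u<R. f a u)"
      by (rule sum.cong) auto
    finally show ?thesis .
  qed
  finally show ?case using Suc by (simp add: lessThan_Suc)
qed

lemma sq_sum_disj:
  assumes "finite K" "\<forall>k1\<in>K. \<forall>k2\<in>K. k1 \<noteq> k2 \<longrightarrow> a k1 = 0 \<or> a k2 = 0"
  shows "(\<Sum>k\<in>K. a k)^2 = (\<Sum>k\<in>K. (a k)^2 :: real)"
proof -
  have "(\<Sum>k\<in>K. a k)^2 = (\<Sum>k\<in>K. \<Sum>l\<in>K. a k * a l)"
    by (simp add: power2_eq_square sum_product)
  also have "\<dots> = (\<Sum>k\<in>K. a k * a k)"
  proof (rule sum.cong[OF refl])
    fix k assume k: "k \<in> K"
    have "(\<Sum>l\<in>K. a k * a l) = a k * a k + (\<Sum>l\<in>K-{k}. a k * a l)"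
      using k assms(1) by (simp add: sum.remove)
    also have "(\<Sum>l\<in>K-{k}. a k * a l) = 0"
      using k assms(2) by (intro sum.neutral) auto
    finally show "(\<Sum>l\<in>K. a k * a l) = a k * a k" by simp
  qed
  finally show ?thesis by (simp add: power2_eq_square)
qed

lemma idxs_Suc: "idxs (Suc L) p = (\<lambda>(k,is). k#is) ` ({..<p 0} \<times> idxs L (p \<circ> Suc))"
proof -
  have "xs \<in> (\<lambda>(k,is). k#is) ` ({..<p 0} \<times> idxs L (p \<circ> Suc))" if "xs \<in> idxs (Suc L) p" for xs
  proof -
    from that obtain k ys where xs: "xs = k # ys" unfolding idxs_def by (cases xs) auto
    show ?thesis using that unfolding xs idxs_def
      by (auto simp: image_iff All_less_Suc2)
  qed
  moreover have "(\<lambda>(k,is). k#is) ` ({..<p 0} \<times> idxs L (p \<circ> Suc)) \<subseteq> idxs (Suc L) p"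
    unfolding idxs_def by (auto simp: All_less_Suc2)
  ultimately show ?thesis by blast
qed

lemma idxs_0: "idxs 0 p = {[]}" unfolding idxs_def by auto

lemma finite_idxs: "finite (idxs L p)"
proof (induct L arbitrary: p)
  case 0 then show ?case by (simp add: idxs_0)
next
  case (Suc L) then show ?case by (simp add: idxs_Suc)
qed

lemma sum_idxs_Suc: "(\<Sum>is\<in>idxs (Suc L) p. g is) = (\<Sum>k<p 0. \<Sum>is\<in>idxs L (p \<circ> Suc). g (k#is))"
  unfolding idxs_Suc
  by (subst sum.reindex) (auto simp: inj_on_def sum.cartesian_product case_prod_beta)

lemma kron_factors_Suc: "kron_factors (Suc L) ell q E (k#is) =
   (E 0 k, ell 0, q 0) # kron_factors L (ell \<circ> Suc) (q \<circ> Suc) (E \<circ> Suc) is"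
  unfolding kron_factors_def by (simp add: map_upt_Suc del: upt_Suc)

lemma kron_list_kf: "kron_list (kron_factors (Suc L) ell q E (k#is)) m n X =
   kron (m * (\<Prod>j<L. ell (Suc j))) (n * (\<Prod>j<L. q (Suc j))) (E 0 k)
     (kron_list (kron_factors L (ell \<circ> Suc) (q \<circ> Suc) (E \<circ> Suc) is) m n X)"
  unfolding kron_factors_Suc by (simp add: kron_factors_def prod_list_upt o_def)

lemma ME_Suc: "ME m n (Suc L) ell q p E X i j =
  (\<Sum>k<p 0. kron (m * (\<Prod>j<L. ell (Suc j))) (n * (\<Prod>j<L. q (Suc j))) (E 0 k)
     (ME m n L (ell \<circ> Suc) (q \<circ> Suc) (p \<circ> Suc) (E \<circ> Suc) (\<lambda>a is b. X a (k#is) b)) i j)"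
  unfolding ME_def sum_idxs_Suc kron_list_kf
  by (simp add: kron_def sum_distrib_left)

lemma core:
  assumes H1: "\<forall>j<L. \<forall>k<p j. (\<Sum>r<ell j. \<Sum>c<q j. (E j k r c)^2) = 1"
    and H2: "\<forall>j<L. \<forall>k1<p j. \<forall>k2<p j. k1 \<noteq> k2 \<longrightarrow>
        (\<forall>r<ell j. \<forall>c<q j. E j k1 r c = 0 \<or> E j k2 r c = 0)"
  shows "(\<Sum>r<m * (\<Prod>j<L. ell j). \<Sum>c<n * (\<Prod>j<L. q j). (ME m n L ell q p E X r c)^2)
       = (\<Sum>is\<in>idxs L p. \<Sum>a<m. \<Sum>b<n. (X a is b)^2)"
  using assms
proof (induct L arbitrary: ell q p E X)
  case 0
  then show ?case by (simp add: idxs_0 ME_def kron_factors_def)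
next
  case (Suc L)
  define R where "R = m * (\<Prod>j<L. ell (Suc j))"
  define C where "C = n * (\<Prod>j<L. q (Suc j))"
  define Z where "Z k = ME m n L (ell \<circ> Suc) (q \<circ> Suc) (p \<circ> Suc) (E \<circ> Suc) (\<lambda>a is b. X a (k#is) b)" for k
  have dR: "m * (\<Prod>j<Suc L. ell j) = ell 0 * R" unfolding R_def prod.lessThan_Suc_shift by simp
  have dC: "n * (\<Prod>j<Suc L. q j) = q 0 * C" unfolding C_def prod.lessThan_Suc_shift by simp
  have ME: "ME m n (Suc L) ell q p E X i j = (\<Sum>k<p 0. E 0 k (i div R) (j div C) * Z k (i mod R) (j mod C))" for i j
    unfolding ME_Suc R_def C_def Z_def kron_def by simp
  have IH: "(\<Sum>u<R. \<Sum>v<C. (Z k u v)^2) = (\<Sum>is\<in>idxs L (p \<circ> Suc). \<Sum>a<m. \<Sum>b<n. (X a (k#is) b)^2)" for k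
  proof -
    have h1: "\<forall>j<L. \<forall>k<(p\<circ>Suc) j. (\<Sum>r<(ell\<circ>Suc) j. \<Sum>c<(q\<circ>Suc) j. ((E\<circ>Suc) j k r c)^2) = 1"
      using Suc.prems(1) by auto
    have h2: "\<forall>j<L. \<forall>k1<(p\<circ>Suc) j. \<forall>k2<(p\<circ>Suc) j. k1 \<noteq> k2 \<longrightarrow>
        (\<forall>r<(ell\<circ>Suc) j. \<forall>c<(q\<circ>Suc) j. (E\<circ>Suc) j k1 r c = 0 \<or> (E\<circ>Suc) j k2 r c = 0)"
      using Suc.prems(2) by auto
    show ?thesis using Suc.hyps[OF h1 h2, of "\<lambda>a is b. X a (k#is) b"]
      unfolding R_def C_def Z_def by (simp add: o_def)
  qed
  have E1: "(\<Sum>x<ell 0. \<Sum>y<q 0. (E 0 k x y)^2) = 1" if "k < p 0" for k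
    using Suc.prems(1) that by auto
  have "(\<Sum>r<m * (\<Prod>j<Suc L. ell j). \<Sum>c<n * (\<Prod>j<Suc L. q j). (ME m n (Suc L) ell q p E X r c)^2)
     = (\<Sum>x<ell 0. \<Sum>u<R. \<Sum>y<q 0. \<Sum>v<C. (\<Sum>k<p 0. E 0 k x y * Z k u v)^2)"
    unfolding dR dC ME
    apply (simp add: sum_divmod[where f = "\<lambda>x u. \<Sum>c<q 0 * C. (\<Sum>k<p 0. E 0 k x (c div C) * Z k u (c mod C))^2"])
    apply (rule sum.cong[OF refl])+
    apply (rule sum_divmod[where f = "\<lambda>y v. (\<Sum>k<p 0. E 0 k _ y * Z k _ v)^2"])
    done
  also have "\<dots> = (\<Sum>x<ell 0. \<Sum>u<R. \<Sum>y<q 0. \<Sum>v<C. \<Sum>k<p 0. (E 0 k x y)^2 * (Z k u v)^2)"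
  proof (intro sum.cong refl)
    fix x u y v assume "x \<in> {..<ell 0}" "y \<in> {..<q 0}"
    then show "(\<Sum>k<p 0. E 0 k x y * Z k u v)^2 = (\<Sum>k<p 0. (E 0 k x y)^2 * (Z k u v)^2)"
    proof -
      have d: "\<forall>k1<p 0. \<forall>k2<p 0. k1 \<noteq> k2 \<longrightarrow> E 0 k1 x y = 0 \<or> E 0 k2 x y = 0"
        using Suc.prems(2) \<open>x \<in> {..<ell 0}\<close> \<open>y \<in> {..<q 0}\<close> by blast
      show ?thesis
        by (subst sq_sum_disj) (use d in \<open>auto simp: power_mult_distrib\<close>)
    qed
  qed
  also have "\<dots> = (\<Sum>k<p 0. (\<Sum>x<ell 0. \<Sum>y<q 0. (E 0 k x y)^2) * (\<Sum>u<R. \<Sum>v<C. (Z k u v)^2))"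
  proof -
    have "(\<Sum>x<ell 0. \<Sum>u<R. \<Sum>y<q 0. \<Sum>v<C. \<Sum>k<p 0. (E 0 k x y)^2 * (Z k u v)^2)
        = (\<Sum>x<ell 0. \<Sum>y<q 0. \<Sum>u<R. \<Sum>v<C. \<Sum>k<p 0. (E 0 k x y)^2 * (Z k u v)^2)"
      by (rule sum.cong[OF refl]) (rule sum.swap)
    also have "\<dots> = (\<Sum>x<ell 0. \<Sum>y<q 0. \<Sum>k<p 0. \<Sum>u<R. \<Sum>v<C. (E 0 k x y)^2 * (Z k u v)^2)"
    proof (rule sum.cong[OF refl], rule sum.cong[OF refl])
      fix x y
      have "(\<Sum>u<R. \<Sum>v<C. \<Sum>k<p 0. (E 0 k x y)^2 * (Z k u v)^2) = (\<Sum>u<R. \<Sum>k<p 0. \<Sum>v<C. (E 0 k x y)^2 * (Z k u v)^2)"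
        by (rule sum.cong[OF refl]) (rule sum.swap)
      also have "\<dots> = (\<Sum>k<p 0. \<Sum>u<R. \<Sum>v<C. (E 0 k x y)^2 * (Z k u v)^2)"
        by (rule sum.swap)
      finally show "(\<Sum>u<R. \<Sum>v<C. \<Sum>k<p 0. (E 0 k x y)^2 * (Z k u v)^2) = (\<Sum>k<p 0. \<Sum>u<R. \<Sum>v<C. (E 0 k x y)^2 * (Z k u v)^2)" .
    qed
    also have "\<dots> = (\<Sum>k<p 0. \<Sum>x<ell 0. \<Sum>y<q 0. \<Sum>u<R. \<Sum>v<C. (E 0 k x y)^2 * (Z k u v)^2)"
    proof -
      have "(\<Sum>x<ell 0. \<Sum>y<q 0. \<Sum>k<p 0. \<Sum>u<R. \<Sum>v<C. (E 0 k x y)^2 * (Z k u v)^2)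
         = (\<Sum>x<ell 0. \<Sum>k<p 0. \<Sum>y<q 0. \<Sum>u<R. \<Sum>v<C. (E 0 k x y)^2 * (Z k u v)^2)"
        by (rule sum.cong[OF refl]) (rule sum.swap)
      also have "\<dots> = (\<Sum>k<p 0. \<Sum>x<ell 0. \<Sum>y<q 0. \<Sum>u<R. \<Sum>v<C. (E 0 k x y)^2 * (Z k u v)^2)"
        by (rule sum.swap)
      finally show ?thesis .
    qed
    also have "\<dots> = (\<Sum>k<p 0. (\<Sum>x<ell 0. \<Sum>y<q 0. (E 0 k x y)^2) * (\<Sum>u<R. \<Sum>v<C. (Z k u v)^2))"
      unfolding sum_distrib_right unfolding sum_distrib_left ..
    finally show ?thesis .
  qed
  also have "\<dots> = (\<Sum>k<p 0. \<Sum>u<R. \<Sum>v<C. (Z k u v)^2)"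
    by (intro sum.cong refl) (simp add: E1)
  also have "\<dots> = (\<Sum>is\<in>idxs (Suc L) p. \<Sum>a<m. \<Sum>b<n. (X a is b)^2)"
    unfolding sum_idxs_Suc IH ..
  finally show ?case .
qed

lemma kron_list_diff: "kron_list fs m n (\<lambda>a b. X a b - Y a b) r c = kron_list fs m n X r c - kron_list fs m n Y r c"
proof (induct fs arbitrary: r c)
  case Nil then show ?case by simp
next
  case (Cons f fs)
  obtain B x y where f: "f = (B, x, y)" by (cases f) auto
  show ?case unfolding f by (simp add: kron_def Cons right_diff_distrib)
qed

lemma E_norm1:
  assumes v: "valid_E L ell q p E" and j: "j < L" and k: "k < p j"
  shows "(\<Sum>r<ell j. \<Sum>c<q j. (E j k r c)^2) = 1"
proof -
  let ?S = "{(r, c). r < ell j \<and> c < q j \<and> E j k r c \<noteq> 0}"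
  let ?e = "real (eta ell q E j k)"
  have e1: "eta ell q E j k \<ge> 1" using v j k unfolding valid_E_def by auto
  have vals: "\<forall>r<ell j. \<forall>c<q j. E j k r c = 0 \<or> E j k r c = 1 / sqrt ?e"
    using v j k unfolding valid_E_def by auto
  have "(\<Sum>r<ell j. \<Sum>c<q j. (E j k r c)^2) = (\<Sum>(r,c)\<in>{..<ell j} \<times> {..<q j}. (E j k r c)^2)"
    by (simp add: sum.cartesian_product)
  also have "\<dots> = (\<Sum>(r,c)\<in>?S. (E j k r c)^2)"
    by (rule sum.mono_neutral_right) auto
  also have "\<dots> = (\<Sum>(r,c)\<in>?S. 1 / ?e)"
  proof (rule sum.cong[OF refl])
    fix x assume "x \<in> ?S"
    then obtain r c where x: "x = (r,c)" "r < ell j" "c < q j" "E j k r c \<noteq> 0" by auto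
    then have "E j k r c = 1 / sqrt ?e" using vals by auto
    then show "(case x of (r, c) \<Rightarrow> (E j k r c)^2) = (case x of (r, c) \<Rightarrow> 1 / ?e)"
      using e1 x by (simp add: power_divide)
  qed
  also have "\<dots> = card ?S * (1 / ?e)" by simp
  also have "\<dots> = 1" using e1 unfolding eta_def by simp
  finally show ?thesis .
qed

theorem lemma7p1:
  fixes m n L :: nat and ell q p :: "nat \<Rightarrow> nat"
    and E :: "nat \<Rightarrow> nat \<Rightarrow> mat" and Ablk :: "nat list \<Rightarrow> mat"
    and A :: mat and That :: tens
  assumes "valid_E L ell q p E"
    and "\<forall>r < m * (\<Prod>j<L. ell j). \<forall>c < n * (\<Prod>j<L. q j).
           A r c = (\<Sum>is\<in>idxs L p. kron_list (kron_factors L ell q E is) m n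
              (\<lambda>a b. sqrt (\<Prod>j<L. real (eta ell q E j (is ! j))) * Ablk is a b) r c)"
  shows "frob (m * (\<Prod>j<L. ell j)) (n * (\<Prod>j<L. q j)) (\<lambda>r c. A r c - ME m n L ell q p E That r c)
       = tfrob m n L p (\<lambda>a is b. TE ell q L E Ablk a is b - That a is b)"
proof -
  let ?D = "\<lambda>a is b. TE ell q L E Ablk a is b - That a is b"
  have H1: "\<forall>j<L. \<forall>k<p j. (\<Sum>r<ell j. \<Sum>c<q j. (E j k r c)^2) = 1"
    using E_norm1[OF assms(1)] by blast
  have H2: "\<forall>j<L. \<forall>k1<p j. \<forall>k2<p j. k1 \<noteq> k2 \<longrightarrow>
        (\<forall>r<ell j. \<forall>c<q j. E j k1 r c = 0 \<or> E j k2 r c = 0)"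
    using assms(1) unfolding valid_E_def by blast
  have eq: "A r c - ME m n L ell q p E That r c = ME m n L ell q p E ?D r c"
    if "r < m * (\<Prod>j<L. ell j)" "c < n * (\<Prod>j<L. q j)" for r c
  proof -
    have "A r c = ME m n L ell q p E (TE ell q L E Ablk) r c"
      using assms(2) that unfolding ME_def TE_def by simp
    then show ?thesis unfolding ME_def by (simp add: kron_list_diff sum_subtractf)
  qed
  have "(\<Sum>r<m * (\<Prod>j<L. ell j). \<Sum>c<n * (\<Prod>j<L. q j). (A r c - ME m n L ell q p E That r c)^2)
     = (\<Sum>r<m * (\<Prod>j<L. ell j). \<Sum>c<n * (\<Prod>j<L. q j). (ME m n L ell q p E ?D r c)^2)"
    using eq by (intro sum.cong refl) auto
  also have "\<dots> = (\<Sum>is\<in>idxs L p. \<Sum>a<m. \<Sum>b<n. (?D a is b)^2)"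
    by (rule core[OF H1 H2])
  also have "\<dots> = (\<Sum>a<m. \<Sum>is\<in>idxs L p. \<Sum>b<n. (?D a is b)^2)"
    by (rule sum.swap)
  finally show ?thesis unfolding frob_def tfrob_def by simp
qed

end
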